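(* Let $G$ be connected with weights $w:E\to\mathbb{R}_{>0}$ and let $\pi$ be a vertex order. Every metric $m$ on $G_\pi^*$ that respects $w$ and satisfies the lower triangle inequality is customized, i.e. for all $s,t\in V$ there is an up-down $s$–$t$ path in $G_\pi^*$ whose $m$-length equals $\mathrm{dist}_I(s,t)$.
   Context: Let $G=(V,E)$ be a finite simple undirected graph with $n=|V|$ vertices. A vertex order is a bijection $\pi:\{1,\dots,n\}\to V$; the rank of $v$ is $\pi^{-1}(v)$. Contracting a vertex $v$ in a graph means deleting $v$ and its incident edges and adding an edge between every pair of former neighbors of $v$ that are not already adjacent. The core graph $G_{\pi,i}$ is obtained from $G$ by contracting $\pi(1),\dots,\pi(i-1)$ in this order. $G_\pi^*$ is the graph on $V$ whose edge set is the union of the edge sets of all $G_{\pi,i}$, $i=1,\dots,n$ (i.e. $G$ together with all edges inserted during the contractions). Let $w:E\to\mathbb{R}_{>0}$ and let $\mathrm{dist}_I(s,t)$ be the shortest $s$–$t$ path length in $(G,w)$. A metric is a map $m$ assigning to every edge of $G_\pi^*$ a value in $\mathbb{R}_{>0}\cup\{\infty\}$; the $m$-length of a path in $G_\pi^*$ is the sum of $m$ over its edges. An up-down path is a path $v_0,\dots,v_k$ in $G_\pi^*$ for which there is $j$ with the ranks strictly increasing along $v_0,\dots,v_j$ and strictly decreasing along $v_j,\dots,v_k$. $\mathrm{dist}_A(s,t)$ is the minimum $m$-length of an $s$–$t$ path in $G_\pi^*$, and $\mathrm{dist}_{UD}(s,t)$ the minimum $m$-length of an up-down $s$–$t$ path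 ($\infty$ if none). The metric $m$ respects $w$ if $\mathrm{dist}_A(s,t)=\mathrm{dist}_I(s,t)$ for all $s,t$; it is customized if moreover $\mathrm{dist}_{UD}(s,t)=\mathrm{dist}_A(s,t)$ for all $s,t$. It satisfies the lower triangle inequality if for every edge $\{x,y\}$ of $G_\pi^*$ and every vertex $z$ of rank smaller than the ranks of both $x$ and $y$ that is adjacent to both $x$ and $y$ in $G_\pi^*$, $m(\{x,y\})\le m(\{x,z\})+m(\{z,y\})$. *)

theory Defs
  imports Main "HOL-Library.Extended_Real"
begin

type_synonym 'a graph = "'a set \<times> 'a set set"

definition simple_graph :: "'a graph \<Rightarrow> bool" where
  "simple_graph G \<longleftrightarrow> finite (fst G) \<and>
     (\<forall>e \<in> snd G. \<exists>x y. x \<noteq> y \<and> x \<in> fst G \<and> y \<in> fst G \<and> e = {x, y})"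

definition contract :: "'a graph \<Rightarrow> 'a \<Rightarrow> 'a graph" where
  "contract G v = (fst G - {v},
      {e \<in> snd G. v \<notin> e} \<union>
      {{x, y} | x y. x \<noteq> y \<and> {v, x} \<in> snd G \<and> {v, y} \<in> snd G})"

(* core G \<sigma> i is the core graph G_{\<sigma>,i+1}: contract \<sigma> 1, ..., \<sigma> i *)
fun core :: "'a graph \<Rightarrow> (nat \<Rightarrow> 'a) \<Rightarrow> nat \<Rightarrow> 'a graph" where
  "core G \<sigma> 0 = G"
| "core G \<sigma> (Suc i) = contract (core G \<sigma> i) (\<sigma> (Suc i))"

(* edge set of G*_pi: union of the edge sets of G_{\<sigma>,1}, ..., G_{\<sigma>,n} *)
definition chordal_edges :: "'a graph \<Rightarrow> (nat \<Rightarrow> 'a) \<Rightarrow> 'a set set" where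
  "chordal_edges G \<sigma> = (\<Union>i < card (fst G). snd (core G \<sigma> i))"

definition vertex_order :: "'a graph \<Rightarrow> (nat \<Rightarrow> 'a) \<Rightarrow> bool" where
  "vertex_order G \<sigma> \<longleftrightarrow> bij_betw \<sigma> {1..card (fst G)} (fst G)"

definition rank :: "'a graph \<Rightarrow> (nat \<Rightarrow> 'a) \<Rightarrow> 'a \<Rightarrow> nat" where
  "rank G \<sigma> v = inv_into {1..card (fst G)} \<sigma> v"

definition path_edges :: "'a list \<Rightarrow> 'a set list" where
  "path_edges p = map (\<lambda>(a, b). {a, b}) (zip p (tl p))"

definition is_path :: "'a set set \<Rightarrow> 'a list \<Rightarrow> 'a \<Rightarrow> 'a \<Rightarrow> bool" where
  "is_path E p s t \<longleftrightarrow> p \<noteq> [] \<and> hd p = s \<and> last p = t \<and> distinct p \<and>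
     set (path_edges p) \<subseteq> E"

definition path_len :: "('a set \<Rightarrow> ereal) \<Rightarrow> 'a list \<Rightarrow> ereal" where
  "path_len m p = sum_list (map m (path_edges p))"

definition connected :: "'a graph \<Rightarrow> bool" where
  "connected G \<longleftrightarrow> (\<forall>s \<in> fst G. \<forall>t \<in> fst G. \<exists>p. is_path (snd G) p s t)"

definition up_down :: "('a \<Rightarrow> nat) \<Rightarrow> 'a list \<Rightarrow> bool" where
  "up_down r p \<longleftrightarrow> (\<exists>j < length p.
      (\<forall>i. i < j \<longrightarrow> r (p ! i) < r (p ! Suc i)) \<and>
      (\<forall>i. j \<le> i \<and> Suc i < length p \<longrightarrow> r (p ! i) > r (p ! Suc i)))"

definition dist_I :: "'a graph \<Rightarrow> ('a set \<Rightarrow> real) \<Rightarrow> 'a \<Rightarrow> 'a \<Rightarrow> ereal" where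
  "dist_I G w s t = (INF p \<in> {p. is_path (snd G) p s t}. path_len (\<lambda>e. ereal (w e)) p)"

definition dist_A :: "'a graph \<Rightarrow> (nat \<Rightarrow> 'a) \<Rightarrow> ('a set \<Rightarrow> ereal) \<Rightarrow> 'a \<Rightarrow> 'a \<Rightarrow> ereal" where
  "dist_A G \<sigma> m s t = (INF p \<in> {p. is_path (chordal_edges G \<sigma>) p s t}. path_len m p)"

(* dist_UD (infimum over empty set = \<infinity>) *)
definition dist_UD :: "'a graph \<Rightarrow> (nat \<Rightarrow> 'a) \<Rightarrow> ('a set \<Rightarrow> ereal) \<Rightarrow> 'a \<Rightarrow> 'a \<Rightarrow> ereal" where
  "dist_UD G \<sigma> m s t = (INF p \<in> {p. is_path (chordal_edges G \<sigma>) p s t \<and> up_down (rank G \<sigma>) p}.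
       path_len m p)"

definition is_metric :: "'a graph \<Rightarrow> (nat \<Rightarrow> 'a) \<Rightarrow> ('a set \<Rightarrow> ereal) \<Rightarrow> bool" where
  "is_metric G \<sigma> m \<longleftrightarrow> (\<forall>e \<in> chordal_edges G \<sigma>. m e > 0)"

definition respects_w :: "'a graph \<Rightarrow> (nat \<Rightarrow> 'a) \<Rightarrow> ('a set \<Rightarrow> ereal) \<Rightarrow> ('a set \<Rightarrow> real) \<Rightarrow> bool" where
  "respects_w G \<sigma> m w \<longleftrightarrow> (\<forall>s \<in> fst G. \<forall>t \<in> fst G. dist_A G \<sigma> m s t = dist_I G w s t)"

definition customized :: "'a graph \<Rightarrow> (nat \<Rightarrow> 'a) \<Rightarrow> ('a set \<Rightarrow> ereal) \<Rightarrow> ('a set \<Rightarrow> real) \<Rightarrow> bool" where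
  "customized G \<sigma> m w \<longleftrightarrow> respects_w G \<sigma> m w \<and>
     (\<forall>s \<in> fst G. \<forall>t \<in> fst G. dist_UD G \<sigma> m s t = dist_A G \<sigma> m s t)"

definition lower_triangle :: "'a graph \<Rightarrow> (nat \<Rightarrow> 'a) \<Rightarrow> ('a set \<Rightarrow> ereal) \<Rightarrow> bool" where
  "lower_triangle G \<sigma> m \<longleftrightarrow> (\<forall>x y z. {x, y} \<in> chordal_edges G \<sigma> \<and>
      rank G \<sigma> z < rank G \<sigma> x \<and> rank G \<sigma> z < rank G \<sigma> y \<and>
      {x, z} \<in> chordal_edges G \<sigma> \<and> {z, y} \<in> chordal_edges G \<sigma> \<longrightarrow>
      m {x, y} \<le> m {x, z} + m {z, y})"

end

theory Submission
  imports Defs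
begin

lemma Inf_attained:
  fixes A :: "'b::complete_linorder set"
  assumes "finite A" "A \<noteq> {}" shows "Inf A \<in> A"
proof -
  have "Inf A = Min A" using assms by (rule cInf_eq_Min)
  thus ?thesis using Min_in assms by simp
qed

lemma core_fst: "fst (core G \<sigma> i) = fst G - \<sigma> ` {1..i}"
proof (induction i)
  case 0 then show ?case by simp
next
  case (Suc i)
  have "{1..Suc i} = insert (Suc i) {1..i}" by (auto)
  then show ?case using Suc by (auto simp: contract_def)
qed

lemma core_simple:
  assumes "simple_graph G"
  shows "\<forall>e \<in> snd (core G \<sigma> i). \<exists>x y. x \<noteq> y \<and> x \<in> fst (core G \<sigma> i) \<and> y \<in> fst (core G \<sigma> i) \<and> e = {x, y}"
proof (induction i)
  case 0 then show ?case using assms by (simp add: simple_graph_def)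
next
  case (Suc i)
  define C where "C = core G \<sigma> i"
  define v where "v = \<sigma> (Suc i)"
  have IH: "\<forall>e \<in> snd C. \<exists>x y. x \<noteq> y \<and> x \<in> fst C \<and> y \<in> fst C \<and> e = {x, y}"
    using Suc C_def by simp
  have nb: "x \<in> fst C \<and> x \<noteq> v" if hx: "{v, x} \<in> snd C" for x
  proof -
    obtain a b where ab: "a \<noteq> b" "a \<in> fst C" "b \<in> fst C" and eq: "{v,x} = {a,b}" using bspec[OF IH hx] by blast
    have "x \<in> {a,b}" using eq by blast
    hence "x \<in> fst C" using ab by blast
    moreover have "x \<noteq> v"
    proof
      assume "x = v"
      hence "{a,b} = {v}" using eq by simp
      hence "a = v" "b = v" by blast+
      thus False using ab by simp
    qed
    ultimately show ?thesis by blast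
  qed
  have fC: "fst (core G \<sigma> (Suc i)) = fst C - {v}" by (simp add: C_def v_def contract_def)
  show ?case
  proof
    fix e assume "e \<in> snd (core G \<sigma> (Suc i))"
    hence "e \<in> snd (contract C v)" by (simp add: C_def v_def)
    hence "(e \<in> snd C \<and> v \<notin> e) \<or> (\<exists>x y. e = {x,y} \<and> x \<noteq> y \<and> {v, x} \<in> snd C \<and> {v, y} \<in> snd C)"
      unfolding contract_def snd_conv Un_iff mem_Collect_eq by blast
    thus "\<exists>x y. x \<noteq> y \<and> x \<in> fst (core G \<sigma> (Suc i)) \<and> y \<in> fst (core G \<sigma> (Suc i)) \<and> e = {x, y}"
    proof
      assume h: "e \<in> snd C \<and> v \<notin> e"
      then obtain x y where xy: "x \<noteq> y" "x \<in> fst C" "y \<in> fst C" "e = {x, y}" using bspec[OF IH, of e] h by blast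
      have "v \<noteq> x" "v \<noteq> y" using h xy(4) by blast+
      hence "x \<in> fst (core G \<sigma> (Suc i))" "y \<in> fst (core G \<sigma> (Suc i))" using xy(2,3) unfolding fC by blast+
      thus ?thesis using xy(1,4) by blast
    next
      assume "\<exists>x y. e = {x,y} \<and> x \<noteq> y \<and> {v, x} \<in> snd C \<and> {v, y} \<in> snd C"
      then obtain x y where h: "e = {x,y}" "x \<noteq> y" "{v, x} \<in> snd C" "{v, y} \<in> snd C" by blast
      have "x \<in> fst (core G \<sigma> (Suc i))" "y \<in> fst (core G \<sigma> (Suc i))" using nb[OF h(3)] nb[OF h(4)] unfolding fC by blast+
      thus ?thesis using h(1,2) by blast
    qed
  qed
qed

lemma core_retain:
  assumes "i \<le> j" "e \<in> snd (core G \<sigma> i)" "\<forall>k. i < k \<and> k \<le> j \<longrightarrow> \<sigma> k \<notin> e"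
  shows "e \<in> snd (core G \<sigma> j)"
  using assms
proof (induction j)
  case 0 then show ?case by simp
next
  case (Suc j)
  show ?case
  proof (cases "i = Suc j")
    case True then show ?thesis using Suc by simp
  next
    case False
    hence "e \<in> snd (core G \<sigma> j)" using Suc by auto
    moreover have "\<sigma> (Suc j) \<notin> e" using Suc False by auto
    ultimately show ?thesis by (simp add: contract_def)
  qed
qed

lemma path_edges_append:
  "path_edges (xs @ y # ys) = path_edges (xs @ [y]) @ path_edges (y # ys)"
proof (induction xs)
  case Nil then show ?case by (simp add: path_edges_def)
next
  case (Cons a xs)
  then show ?case by (cases xs) (auto simp: path_edges_def)
qed

lemma path_edges_cons2: "path_edges (x # z # r) = {x, z} # path_edges (z # r)"
  by (simp add: path_edges_def)

lemma path_vertices: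
  "x \<in> set p \<Longrightarrow> x = hd p \<or> (\<exists>e \<in> set (path_edges p). x \<in> e)"
proof (induction p)
  case Nil then show ?case by simp
next
  case (Cons a p)
  show ?case
  proof (cases p)
    case Nil then show ?thesis using Cons by simp
  next
    case (Cons b q)
    then show ?thesis using Cons.prems Cons.IH by (auto simp: path_edges_cons2)
  qed
qed

lemma unimodal:
  assumes "p \<noteq> []"
    and "\<forall>i. Suc i < length p \<longrightarrow> r (p!i) \<noteq> r (p!Suc i)"
    and "\<not> (\<exists>xs x z y ys. p = xs @ [x,z,y] @ ys \<and> r z < r x \<and> r z < r y)"
  shows "up_down r p"
  using assms
proof (induction p)
  case Nil then show ?case by simp
next
  case (Cons a q)
  show ?case
  proof (cases q)
    case Nil then show ?thesis by (auto simp: up_down_def)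
  next
    case (Cons b q')
    have nv: "\<not> (\<exists>xs x z y ys. q = xs @ [x,z,y] @ ys \<and> r z < r x \<and> r z < r y)"
    proof
      assume "\<exists>xs x z y ys. q = xs @ [x,z,y] @ ys \<and> r z < r x \<and> r z < r y"
      then obtain xs x z y ys where "q = xs @ [x,z,y] @ ys" "r z < r x" "r z < r y" by blast
      hence "a # q = (a # xs) @ [x,z,y] @ ys \<and> r z < r x \<and> r z < r y" by simp
      thus False using Cons.prems(3) by blast
    qed
    have ad: "\<forall>i. Suc i < length q \<longrightarrow> r (q!i) \<noteq> r (q!Suc i)"
      using Cons.prems(2) by (metis Suc_less_eq length_Cons nth_Cons_Suc)
    have "up_down r q" using Cons.IH[OF _ ad nv] Cons by simp
    then obtain j where j: "j < length q" "\<forall>i. i < j \<longrightarrow> r (q ! i) < r (q ! Suc i)"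
      "\<forall>i. j \<le> i \<and> Suc i < length q \<longrightarrow> r (q ! i) > r (q ! Suc i)"
      unfolding up_down_def by blast
    have "r a \<noteq> r (q!0)" using Cons.prems(2) Cons by auto
    hence "r a < r (q!0) \<or> r a > r (q!0)" by auto
    thus ?thesis
    proof
      assume lt: "r a < r (q!0)"
      show ?thesis unfolding up_down_def
      proof (intro exI[of _ "Suc j"] conjI allI impI)
        show "Suc j < length (a # q)" using j by simp
        fix i assume "i < Suc j"
        thus "r ((a # q) ! i) < r ((a # q) ! Suc i)" using lt j(2) by (cases i) auto
      next
        fix i assume "Suc j \<le> i \<and> Suc i < length (a # q)"
        thus "r ((a # q) ! i) > r ((a # q) ! Suc i)" using j(3) by (cases i) auto
      qed
    next
      assume gt: "r a > r (q!0)"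
      have j0: "j = 0"
      proof (rule ccontr)
        assume "j \<noteq> 0"
        then obtain c q'' where qq: "q' = c # q''" using j(1) Cons by (cases q') auto
        have "r b < r c" using j(2) \<open>j \<noteq> 0\<close> Cons qq by fastforce
        moreover have "r b < r a" using gt Cons by simp
        moreover have "a # q = [] @ [a,b,c] @ q''" using Cons qq by simp
        ultimately show False using Cons.prems(3) by blast
      qed
      show ?thesis unfolding up_down_def
      proof (intro exI[of _ "0"] conjI allI impI)
        show "0 < length (a # q)" by simp
        fix i assume "i < (0::nat)" thus "r ((a # q) ! i) < r ((a # q) ! Suc i)" by simp
      next
        fix i assume "0 \<le> i \<and> Suc i < length (a # q)"
        thus "r ((a # q) ! i) > r ((a # q) ! Suc i)" using j(3) j0 gt by (cases i) auto
      qed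
    qed
  qed
qed

lemma rank_props:
  assumes "vertex_order G \<sigma>" "v \<in> fst G"
  shows "rank G \<sigma> v \<in> {1..card (fst G)} \<and> \<sigma> (rank G \<sigma> v) = v"
proof -
  have b: "bij_betw \<sigma> {1..card (fst G)} (fst G)" using assms(1) by (simp add: vertex_order_def)
  hence im: "\<sigma> ` {1..card (fst G)} = fst G" by (simp add: bij_betw_def)
  have vi: "v \<in> \<sigma> ` {1..card (fst G)}" using im assms(2) by simp
  show ?thesis unfolding rank_def using inv_into_into[OF vi] f_inv_into_f[OF vi] by simp
qed

lemma rank_sigma:
  assumes "vertex_order G \<sigma>" "l \<in> {1..card (fst G)}"
  shows "rank G \<sigma> (\<sigma> l) = l"
proof -
  have b: "bij_betw \<sigma> {1..card (fst G)} (fst G)" using assms(1) by (simp add: vertex_order_def)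
  hence "inj_on \<sigma> {1..card (fst G)}" by (simp add: bij_betw_def)
  thus ?thesis unfolding rank_def using assms(2) by (simp add: inv_into_f_f)
qed

lemma chordal_sub:
  assumes "simple_graph G" "e \<in> chordal_edges G \<sigma>"
  shows "\<exists>x y. x \<noteq> y \<and> x \<in> fst G \<and> y \<in> fst G \<and> e = {x,y}"
proof -
  obtain i where "e \<in> snd (core G \<sigma> i)" using assms(2) by (auto simp: chordal_edges_def)
  then obtain x y where "x \<noteq> y" "x \<in> fst (core G \<sigma> i)" "y \<in> fst (core G \<sigma> i)" "e = {x,y}"
    using core_simple[OF assms(1)] by blast
  moreover have "fst (core G \<sigma> i) \<subseteq> fst G" using core_fst[of G \<sigma> i] by simp
  ultimately show ?thesis by blast
qed

lemma chordal:
  assumes sg: "simple_graph G" and vo: "vertex_order G \<sigma>"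
    and V: "x \<in> fst G" "y \<in> fst G" "z \<in> fst G" and xy: "x \<noteq> y"
    and ex: "{x,z} \<in> chordal_edges G \<sigma>" and ey: "{z,y} \<in> chordal_edges G \<sigma>"
    and rx: "rank G \<sigma> z < rank G \<sigma> x" and ry: "rank G \<sigma> z < rank G \<sigma> y"
  shows "{x,y} \<in> chordal_edges G \<sigma>"
proof -
  define n where "n = card (fst G)"
  define k where "k = rank G \<sigma> z"
  have kz: "k \<in> {1..n}" "\<sigma> k = z" using rank_props[OF vo V(3)] by (auto simp: k_def n_def)
  have xr: "rank G \<sigma> x \<in> {1..n}" "\<sigma> (rank G \<sigma> x) = x" using rank_props[OF vo V(1)] by (auto simp: n_def)
  have yr: "rank G \<sigma> y \<in> {1..n}" "\<sigma> (rank G \<sigma> y) = y" using rank_props[OF vo V(2)] by (auto simp: n_def)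
  have kn: "k < n" using rx xr(1) k_def by auto
  have idx: "l = rank G \<sigma> v" if "l \<in> {1..n}" "\<sigma> l = v" for l v
    using rank_sigma[OF vo] that n_def by auto
  have down: "{z,u} \<in> snd (core G \<sigma> (k - 1))"
    if eu: "{z,u} \<in> chordal_edges G \<sigma>" and ru: "k < rank G \<sigma> u" and uV: "u \<in> fst G" for u
  proof -
    obtain i where i: "i < n" "{z,u} \<in> snd (core G \<sigma> i)" using eu by (auto simp: chordal_edges_def n_def)
    obtain a b where ab: "a \<noteq> b" "a \<in> fst (core G \<sigma> i)" "b \<in> fst (core G \<sigma> i)" and eq: "{z,u} = {a,b}"
      using bspec[OF core_simple[OF sg] i(2)] by blast
    have "z \<in> {a,b}" using eq by blast
    hence "z \<in> fst (core G \<sigma> i)" using ab by blast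
    hence zn: "z \<notin> \<sigma> ` {1..i}" using core_fst[of G \<sigma> i] by blast
    have ik: "i < k"
    proof (rule ccontr)
      assume "\<not> i < k"
      hence "k \<in> {1..i}" using kz(1) by simp
      hence "\<sigma> k \<in> \<sigma> ` {1..i}" by (rule imageI)
      thus False using zn kz(2) by simp
    qed
    show ?thesis
    proof (rule core_retain[OF _ i(2)])
      show "i \<le> k - 1" using ik by simp
      show "\<forall>l. i < l \<and> l \<le> k - 1 \<longrightarrow> \<sigma> l \<notin> {z, u}"
      proof (intro allI impI)
        fix l assume l: "i < l \<and> l \<le> k - 1"
        hence lr: "l \<in> {1..n}" using kn by auto
        show "\<sigma> l \<notin> {z, u}"
        proof
          assume "\<sigma> l \<in> {z,u}"
          hence "l = k \<or> l = rank G \<sigma> u" using idx[OF lr] k_def by auto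
          thus False using l ru ik by auto
        qed
      qed
    qed
  qed
  have e1: "{z,x} \<in> snd (core G \<sigma> (k - 1))" using down[of x] ex rx V k_def by (simp add: insert_commute)
  have e2: "{z,y} \<in> snd (core G \<sigma> (k - 1))" using down[of y] ey ry V k_def by simp
  have "Suc (k - 1) = k" using kz by auto
  hence "core G \<sigma> k = contract (core G \<sigma> (k - 1)) z" using kz
    by (metis core.simps(2))
  hence "{x,y} \<in> snd (core G \<sigma> k)" using e1 e2 xy unfolding contract_def by auto
  thus ?thesis using kn by (auto simp: chordal_edges_def n_def)
qed

lemma finite_paths:
  assumes "simple_graph G" "s \<in> fst G"
  shows "finite {p. is_path (chordal_edges G \<sigma>) p s t}"
proof -
  have "{p. is_path (chordal_edges G \<sigma>) p s t} \<subseteq> {xs. set xs \<subseteq> fst G \<and> length xs \<le> card (fst G)}"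
  proof
    fix p assume "p \<in> {p. is_path (chordal_edges G \<sigma>) p s t}"
    hence p: "is_path (chordal_edges G \<sigma>) p s t" by simp
    have sub: "set p \<subseteq> fst G"
    proof
      fix x assume "x \<in> set p"
      hence "x = hd p \<or> (\<exists>e \<in> set (path_edges p). x \<in> e)" by (rule path_vertices)
      thus "x \<in> fst G" using p assms chordal_sub[OF assms(1)] unfolding is_path_def by blast
    qed
    have "length p = card (set p)" using p by (simp add: is_path_def distinct_card)
    also have "\<dots> \<le> card (fst G)" using sub assms(1) by (simp add: card_mono simple_graph_def)
    finally show "p \<in> {xs. set xs \<subseteq> fst G \<and> length xs \<le> card (fst G)}" using sub by simp
  qed
  moreover have "finite {xs. set xs \<subseteq> fst G \<and> length xs \<le> card (fst G)}"
    using assms(1) by (simp add: finite_lists_length_le simple_graph_def)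
  ultimately show ?thesis by (rule finite_subset)
qed

lemma path_set_V:
  assumes "simple_graph G" "s \<in> fst G" "is_path (chordal_edges G \<sigma>) p s t"
  shows "set p \<subseteq> fst G"
proof
  fix x assume "x \<in> set p"
  hence "x = hd p \<or> (\<exists>e \<in> set (path_edges p). x \<in> e)" by (rule path_vertices)
  thus "x \<in> fst G" using assms chordal_sub[OF assms(1)] unfolding is_path_def by blast
qed

lemma best_path:
  fixes m :: "'a set \<Rightarrow> ereal"
  assumes sg: "simple_graph G" and con: "connected G" and vo: "vertex_order G \<sigma>"
    and lt: "lower_triangle G \<sigma> m" and s: "s \<in> fst G" and t: "t \<in> fst G"
  shows "\<exists>p. is_path (chordal_edges G \<sigma>) p s t \<and> up_down (rank G \<sigma>) p \<and> path_len m p = dist_A G \<sigma> m s t"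
proof -
  define E where "E = chordal_edges G \<sigma>"
  define r where "r = rank G \<sigma>"
  define P where "P = {p. is_path E p s t}"
  define D where "D = dist_A G \<sigma> m s t"
  have D: "D = Inf (path_len m ` P)" by (simp add: D_def dist_A_def P_def E_def)
  have fin: "finite P" using finite_paths[OF sg s] by (simp add: P_def E_def)
  obtain p0 where "is_path (snd G) p0 s t" using con s t by (auto simp: connected_def)
  moreover have "snd G \<subseteq> E"
  proof -
    have "card (fst G) > 0" using s sg by (auto simp: simple_graph_def card_gt_0_iff)
    thus ?thesis unfolding E_def chordal_edges_def by force
  qed
  ultimately have "p0 \<in> P" by (auto simp: P_def is_path_def)
  hence "D \<in> path_len m ` P" using D fin Inf_attained by blast
  then obtain p1 where p1: "p1 \<in> P" "path_len m p1 = D" by blast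
  define S where "S = {p \<in> P. path_len m p = D}"
  have "\<exists>k. \<exists>p \<in> S. length p = k" using p1 S_def by blast
  then obtain k where k: "\<exists>p \<in> S. length p = k" "\<And>k'. k' < k \<Longrightarrow> \<not> (\<exists>p \<in> S. length p = k')"
    using exists_least_iff[of "\<lambda>k. \<exists>p \<in> S. length p = k"] by blast
  then obtain p where pS: "p \<in> S" "length p = k" by blast
  have pp: "is_path E p s t" "path_len m p = D" using pS by (auto simp: S_def P_def)
  have pV: "set p \<subseteq> fst G" using path_set_V[OF sg s] pp(1) E_def by simp
  have nv: "\<not> (\<exists>xs x z y ys. p = xs @ [x,z,y] @ ys \<and> r z < r x \<and> r z < r y)"
  proof
    assume "\<exists>xs x z y ys. p = xs @ [x,z,y] @ ys \<and> r z < r x \<and> r z < r y"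
    then obtain xs x z y ys where dec: "p = xs @ [x,z,y] @ ys" and rz: "r z < r x" "r z < r y" by blast
    define q where "q = xs @ [x,y] @ ys"
    have pe: "path_edges p = path_edges (xs @ [x]) @ {x,z} # {z,y} # path_edges (y # ys)"
      unfolding dec using path_edges_append[of xs x "z # y # ys"] by (simp add: path_edges_cons2)
    have qe: "path_edges q = path_edges (xs @ [x]) @ {x,y} # path_edges (y # ys)"
      unfolding q_def using path_edges_append[of xs x "y # ys"] by (simp add: path_edges_cons2)
    have xyz: "x \<in> fst G" "y \<in> fst G" "z \<in> fst G" using pV dec by auto
    have dp: "distinct p" using pp(1) by (simp add: is_path_def)
    hence xy: "x \<noteq> y" using dec by auto
    have exz: "{x,z} \<in> E" "{z,y} \<in> E" using pp(1) pe by (auto simp: is_path_def)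
    have exy: "{x,y} \<in> E" using chordal[OF sg vo xyz xy] exz rz by (simp add: E_def r_def)
    have mle: "m {x,y} \<le> m {x,z} + m {z,y}" using lt exy exz rz
      unfolding lower_triangle_def E_def r_def by blast
    have qP: "q \<in> P"
      unfolding P_def is_path_def
    proof (intro CollectI conjI)
      show "q \<noteq> []" by (simp add: q_def)
      show "hd q = s" using pp(1) dec by (cases xs) (auto simp: q_def is_path_def)
      show "last q = t" using pp(1) dec by (cases ys) (auto simp: q_def is_path_def)
      show "distinct q" using dp dec by (auto simp: q_def)
      show "set (path_edges q) \<subseteq> E" using pp(1) pe qe exy by (auto simp: is_path_def)
    qed
    have "path_len m q \<le> path_len m p"
    proof -
      have "path_len m q = sum_list (map m (path_edges (xs @ [x]))) + (m {x,y} + sum_list (map m (path_edges (y # ys))))"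
        by (simp add: path_len_def qe)
      also have "\<dots> \<le> sum_list (map m (path_edges (xs @ [x]))) + ((m {x,z} + m {z,y}) + sum_list (map m (path_edges (y # ys))))"
        using mle by (intro add_mono) auto
      also have "\<dots> = path_len m p" by (simp add: path_len_def pe add.assoc)
      finally show ?thesis .
    qed
    moreover have "D \<le> path_len m q" using qP D by (simp add: INF_lower)
    ultimately have "q \<in> S" using qP pp(2) S_def by auto
    moreover have "length q < k" using pS(2) dec q_def by simp
    ultimately show False using k(2) by blast
  qed
  have ad: "\<forall>i. Suc i < length p \<longrightarrow> r (p!i) \<noteq> r (p!Suc i)"
  proof (intro allI impI)
    fix i assume i: "Suc i < length p"
    have "p!i \<noteq> p!Suc i" using pp(1) i by (simp add: is_path_def nth_eq_iff_index_eq)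
    moreover have "p!i \<in> fst G" "p!Suc i \<in> fst G" using pV i by auto
    ultimately show "r (p!i) \<noteq> r (p!Suc i)"
      using rank_props[OF vo] unfolding r_def by metis
  qed
  have "up_down r p" using unimodal[OF _ ad nv] pp(1) by (simp add: is_path_def)
  thus ?thesis using pp E_def r_def D_def by blast
qed

theorem mainTheorem5:
  fixes G :: "'a graph" and w :: "'a set \<Rightarrow> real" and \<sigma> :: "nat \<Rightarrow> 'a"
    and m :: "'a set \<Rightarrow> ereal"
  assumes "simple_graph G" and "connected G"
    and "\<forall>e \<in> snd G. w e > 0"
    and "vertex_order G \<sigma>"
    and "is_metric G \<sigma> m"
    and "respects_w G \<sigma> m w"
    and "lower_triangle G \<sigma> m"
  shows "customized G \<sigma> m w \<and>
    (\<forall>s \<in> fst G. \<forall>t \<in> fst G. \<exists>p. is_path (chordal_edges G \<sigma>) p s t \<and>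
        up_down (rank G \<sigma>) p \<and> path_len m p = dist_I G w s t)"
proof -
  have bp: "\<exists>p. is_path (chordal_edges G \<sigma>) p s t \<and> up_down (rank G \<sigma>) p \<and> path_len m p = dist_A G \<sigma> m s t"
    if "s \<in> fst G" "t \<in> fst G" for s t
    using best_path[OF assms(1,2,4,7) that] .
  have ud: "dist_UD G \<sigma> m s t = dist_A G \<sigma> m s t" if st: "s \<in> fst G" "t \<in> fst G" for s t
  proof (rule antisym)
    obtain p where p: "is_path (chordal_edges G \<sigma>) p s t" "up_down (rank G \<sigma>) p" "path_len m p = dist_A G \<sigma> m s t"
      using bp[OF st] by blast
    show "dist_UD G \<sigma> m s t \<le> dist_A G \<sigma> m s t"
      unfolding dist_UD_def using p by (metis (mono_tags, lifting) INF_lower mem_Collect_eq)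
    show "dist_A G \<sigma> m s t \<le> dist_UD G \<sigma> m s t"
      unfolding dist_UD_def dist_A_def by (rule INF_superset_mono) auto
  qed
  show ?thesis
    using assms(6) ud bp unfolding customized_def respects_w_def by metis
qed

end
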